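(* Let $\mathcal{A}$ be an associative algebra over a commutative unital ring containing $\mathbb{Q}$, and let $D_1,D_2$ be derivations of $\mathcal{A}$ with $D_1D_2-D_2D_1=D_1$. For $n\ge 0$ let $[D_2]_n=D_2(D_2-1)(D_2-2)\cdots(D_2-n+1)$ (with $[D_2]_0=\mathrm{id}_{\mathcal{A}}$, and integers meaning integer multiples of $\mathrm{id}_{\mathcal{A}}$). Then the multiplication on $\mathcal{A}[[\hbar]]$ given for $a,b\in\mathcal{A}$ by $$a\star b=\sum_{n=0}^{\infty}\frac{\hbar^n}{n!}\,D_1^n(a)\,[D_2]_n(b)$$ is associative; thus $D_1\smile D_2$ is an integrable infinitesimal deformation of $\mathcal{A}$ with this integral.
   Context: $(f\smile g)(a,b)=f(a)g(b)$ for linear maps $f,g:\mathcal{A}\to\mathcal{A}$. *)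

theory Defs
  imports Main "HOL.Modules"
begin

text \<open>An associative algebra A (type 'a, class ring: associative, distributive,
 not necessarily unital) over a commutative unital ring R (type 'r) via the
 scalar action scale.\<close>
definition assoc_algebra :: "('r::comm_ring_1 \<Rightarrow> 'a::ring \<Rightarrow> 'a) \<Rightarrow> bool" where
  "assoc_algebra scale \<longleftrightarrow> module scale \<and>
     (\<forall>r a b. scale r (a * b) = scale r a * b \<and> scale r (a * b) = a * scale r b)"

text \<open>R contains Q: every positive integer is invertible in R.\<close>
definition contains_rationals :: "'r::comm_ring_1 itself \<Rightarrow> bool" where
  "contains_rationals _ \<longleftrightarrow> (\<forall>n::nat. n > 0 \<longrightarrow> (\<exists>s::'r. of_nat n * s = 1))"

definition ring_inv :: "'r::comm_ring_1 \<Rightarrow> 'r" where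
  "ring_inv r = (THE s. r * s = 1)"

definition derivation :: "('r::comm_ring_1 \<Rightarrow> 'a::ring \<Rightarrow> 'a) \<Rightarrow> ('a \<Rightarrow> 'a) \<Rightarrow> bool" where
  "derivation scale D \<longleftrightarrow>
     (\<forall>a b. D (a + b) = D a + D b) \<and> (\<forall>r a. D (scale r a) = scale r (D a)) \<and>
     (\<forall>a b. D (a * b) = D a * b + a * D b)"

fun falling_op :: "('r::comm_ring_1 \<Rightarrow> 'a::ring \<Rightarrow> 'a) \<Rightarrow> ('a \<Rightarrow> 'a) \<Rightarrow> nat \<Rightarrow> 'a \<Rightarrow> 'a" where
  "falling_op scale D 0 = id"
| "falling_op scale D (Suc n) = falling_op scale D n \<circ> (\<lambda>a. D a - scale (of_nat n) a)"

text \<open>Elements of A[[h]] are coefficient sequences nat \<Rightarrow> 'a. The product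
 a \<star> b = \<Sum>_k h^k/k! D1^k(a) [D2]_k(b) on A, extended R[[h]]-bilinearly:
 (f \<star> g)_n = \<Sum>_{k+i+j=n} (1/k!) D1^k(f_i) [D2]_k(g_j).\<close>
definition star_prod :: "('r::comm_ring_1 \<Rightarrow> 'a::ring \<Rightarrow> 'a) \<Rightarrow> ('a \<Rightarrow> 'a) \<Rightarrow> ('a \<Rightarrow> 'a)
    \<Rightarrow> (nat \<Rightarrow> 'a) \<Rightarrow> (nat \<Rightarrow> 'a) \<Rightarrow> (nat \<Rightarrow> 'a)" where
  "star_prod scale D1 D2 f g = (\<lambda>n. \<Sum>k\<le>n. \<Sum>i\<le>n - k.
      scale (ring_inv (of_nat (fact k))) ((D1 ^^ k) (f i) * falling_op scale D2 k (g (n - k - i))))"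

end

theory Submission imports Defs begin

definition lin :: "('r::comm_ring_1 \<Rightarrow> 'a::ring \<Rightarrow> 'a) \<Rightarrow> ('a \<Rightarrow> 'a) \<Rightarrow> bool" where
  "lin scale T \<longleftrightarrow> (\<forall>a b. T (a + b) = T a + T b) \<and> (\<forall>r a. T (scale r a) = scale r (T a))"

locale SP =
  fixes scale :: "'r::comm_ring_1 \<Rightarrow> 'a::ring \<Rightarrow> 'a" and D1 D2 :: "'a \<Rightarrow> 'a"
  assumes alg: "assoc_algebra scale" and rat: "contains_rationals TYPE('r)"
    and d1: "derivation scale D1" and d2: "derivation scale D2"
    and comm: "\<forall>a. D1 (D2 a) - D2 (D1 a) = D1 a"
begin

sublocale M: module scale using alg unfolding assoc_algebra_def by blast

lemma scale_mult1: "scale r (a * b) = scale r a * b" using alg unfolding assoc_algebra_def by blast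
lemma scale_mult2: "scale r (a * b) = a * scale r b" using alg unfolding assoc_algebra_def by blast

lemma lin_add: "lin scale T \<Longrightarrow> T (a + b) = T a + T b" by (simp add: lin_def)
lemma lin_scale: "lin scale T \<Longrightarrow> T (scale r a) = scale r (T a)" by (simp add: lin_def)
lemma lin_zero: "lin scale T \<Longrightarrow> T 0 = 0"
  using lin_add[of T 0 0] by simp
lemma lin_minus: "lin scale T \<Longrightarrow> T (- a) = - T a"
  using lin_add[of T a "-a"] lin_zero[of T] by (simp add: add_eq_0_iff2)
lemma lin_diff: "lin scale T \<Longrightarrow> T (a - b) = T a - T b"
  using lin_add[of T a "-b"] lin_minus[of T b] by simp
lemma lin_sum: "lin scale T \<Longrightarrow> T (sum f A) = (\<Sum>x\<in>A. T (f x))"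
  by (induct A rule: infinite_finite_induct) (simp_all add: lin_zero lin_add)
lemma lin_comp: "lin scale S \<Longrightarrow> lin scale T \<Longrightarrow> lin scale (S \<circ> T)"
  by (simp add: lin_def)
lemma lin_id: "lin scale id" by (simp add: lin_def)
lemma lin_id': "lin scale (\<lambda>a. a)" by (simp add: lin_def)
lemma lin_funpow: "lin scale T \<Longrightarrow> lin scale (T ^^ n)"
  by (induct n) (simp_all add: lin_id lin_comp del: comp_apply)

lemma lin_D1: "lin scale D1" using d1 unfolding derivation_def lin_def by blast
lemma lin_D2: "lin scale D2" using d2 unfolding derivation_def lin_def by blast
lemma D1_mult: "D1 (a * b) = D1 a * b + a * D1 b" using d1 unfolding derivation_def by blast
lemma D2_mult: "D2 (a * b) = D2 a * b + a * D2 b" using d2 unfolding derivation_def by blast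
lemma D1D2: "D1 (D2 a) = D2 (D1 a) + D1 a" using comm by (metis diff_eq_eq add.commute)

lemma lin_affine: "lin scale (\<lambda>a. D2 a + scale r a)"
  using lin_D2 by (simp add: lin_def algebra_simps M.scale_left_commute)

fun FF :: "int \<Rightarrow> nat \<Rightarrow> 'a \<Rightarrow> 'a" where
  "FF s 0 = id"
| "FF s (Suc n) = FF s n \<circ> (\<lambda>a. D2 a + scale (of_int s - of_nat n) a)"

lemma lin_FF: "lin scale (FF s n)"
  by (induct n) (simp_all add: lin_id lin_id' lin_comp lin_affine del: comp_apply)

lemma FF0: "FF 0 n = falling_op scale D2 n"
  by (induct n) (simp_all add: algebra_simps)


lemma D1_affine: "D1 (D2 a + scale r a) = D2 (D1 a) + scale (r + 1) (D1 a)"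
  using lin_D1 by (simp add: lin_add lin_scale D1D2 M.scale_left_distrib add.assoc)

lemma D1_FF: "D1 (FF s n a) = FF (s + 1) n (D1 a)"
proof (induct n arbitrary: a)
  case 0 then show ?case by simp
next
  case (Suc n)
  show ?case using Suc by (simp add: D1_affine diff_add_eq)
qed

lemma D1n_FF: "(D1 ^^ m) (FF s l a) = FF (s + int m) l ((D1 ^^ m) a)"
proof (induct m arbitrary: a)
  case 0 then show ?case by simp
next
  case (Suc m) then show ?case by (simp add: D1_FF algebra_simps)
qed

lemma FF_affine: "FF s n (D2 a + scale r a) = D2 (FF s n a) + scale r (FF s n a)"
proof (induct n arbitrary: a)
  case 0 then show ?case by simp
next
  case (Suc n)
  have "FF s (Suc n) (D2 a + scale r a) = FF s n (D2 (D2 a + scale r a) + scale (of_int s - of_nat n) (D2 a + scale r a))"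
    by simp
  also have "\<dots> = FF s n (D2 (D2 a + scale (of_int s - of_nat n) a) + scale r (D2 a + scale (of_int s - of_nat n) a))"
    using lin_D2 by (simp add: lin_add lin_scale M.scale_right_distrib add_ac mult.commute)
  also have "\<dots> = D2 (FF s (Suc n) a) + scale r (FF s (Suc n) a)"
    using lin_FF[of s n] by (simp add: Suc lin_add lin_scale)
  finally show ?case .
qed

lemma FF_comm: "FF s n (FF t m a) = FF t m (FF s n a)"
proof (induct m arbitrary: a)
  case 0 then show ?case by simp
next
  case (Suc m) then show ?case by (simp add: FF_affine)
qed

lemma FF_split: "FF s (m + j) a = FF s m (FF (s - int m) j a)"
proof (induct j arbitrary: a)
  case 0 then show ?case by simp
next
  case (Suc j) then show ?case by (simp add: algebra_simps)
qed

lemma FF_D2: "FF s j (D2 x) = FF s (Suc j) x - scale (of_int s - of_nat j) (FF s j x)"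
  using lin_FF[of s j] by (simp add: lin_add lin_scale)

lemma pascal:
  fixes A :: "nat \<Rightarrow> nat \<Rightarrow> 'a"
  shows "(\<Sum>j\<le>k. scale (of_nat (k choose j)) (A (Suc j) (k - j) + A j (Suc k - j)))
       = (\<Sum>j\<le>Suc k. scale (of_nat (Suc k choose j)) (A j (Suc k - j)))"
proof -
  have e1: "(\<Sum>j\<le>k. scale (of_nat (k choose j)) (A j (Suc k - j)))
      = (\<Sum>j\<le>Suc k. scale (of_nat (k choose j)) (A j (Suc k - j)))"
    by (simp add: binomial_eq_0)
  also have "\<dots> = A 0 (Suc k) + (\<Sum>j\<le>k. scale (of_nat (k choose Suc j)) (A (Suc j) (k - j)))"
    by (subst sum.atMost_Suc_shift) simp
  finally have e1': "(\<Sum>j\<le>k. scale (of_nat (k choose j)) (A j (Suc k - j))) = A 0 (Suc k) + (\<Sum>j\<le>k. scale (of_nat (k choose Suc j)) (A (Suc j) (k - j)))" .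
  have "(\<Sum>j\<le>Suc k. scale (of_nat (Suc k choose j)) (A j (Suc k - j)))
     = A 0 (Suc k) + (\<Sum>j\<le>k. scale (of_nat (k choose j) + of_nat (k choose Suc j)) (A (Suc j) (k - j)))"
    by (subst sum.atMost_Suc_shift) simp
  also have "\<dots> = A 0 (Suc k) + (\<Sum>j\<le>k. scale (of_nat (k choose j)) (A (Suc j) (k - j)))
      + (\<Sum>j\<le>k. scale (of_nat (k choose Suc j)) (A (Suc j) (k - j)))"
    by (simp add: M.scale_left_distrib sum.distrib algebra_simps)
  finally show ?thesis using e1' by (simp add: M.scale_right_distrib sum.distrib algebra_simps)
qed

lemma leibniz: "(D1 ^^ k) (x * y) = (\<Sum>j\<le>k. scale (of_nat (k choose j)) ((D1 ^^ j) x * (D1 ^^ (k - j)) y))"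
proof (induct k arbitrary: x y)
  case 0 then show ?case by simp
next
  case (Suc k)
  have L: "lin scale (D1 ^^ k)" by (rule lin_funpow[OF lin_D1])
  have "(D1 ^^ Suc k) (x * y) = (D1 ^^ k) (D1 x * y) + (D1 ^^ k) (x * D1 y)"
    by (simp only: funpow_Suc_right comp_apply D1_mult lin_add[OF L])
  also have "\<dots> = (\<Sum>j\<le>k. scale (of_nat (k choose j)) ((D1 ^^ Suc j) x * (D1 ^^ (k - j)) y
        + (D1 ^^ j) x * (D1 ^^ (Suc k - j)) y))"
    unfolding Suc M.scale_right_distrib sum.distrib
    by (intro arg_cong2[where f="(+)"] sum.cong refl)
       (simp_all only: funpow_Suc_right comp_apply Suc_diff_le atMost_iff)
  also have "\<dots> = (\<Sum>j\<le>Suc k. scale (of_nat (Suc k choose j)) ((D1 ^^ j) x * (D1 ^^ (Suc k - j)) y))"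
    by (rule pascal[where A="\<lambda>j i. (D1 ^^ j) x * (D1 ^^ i) y"])
  finally show ?case .
qed

lemma FF_term:
  assumes "j \<le> k"
  shows "FF s j (D2 x) * FF t (k - j) y + FF s j x * FF t (k - j) (D2 y)
     + scale (of_int (s + t) - of_nat k) (FF s j x * FF t (k - j) y)
     = FF s (Suc j) x * FF t (k - j) y + FF s j x * FF t (Suc k - j) y"
proof -
  let ?X = "FF s j x" and ?Y = "FF t (k - j) y"
  have sk: "Suc k - j = Suc (k - j)" using assms by simp
  have c: "of_int (s + t) - of_nat k = (of_int s - of_nat j) + (of_int t - of_nat (k - j) :: 'r)"
    using assms by (simp add: of_nat_diff)
  show ?thesis unfolding FF_D2 sk c
    by (simp add: algebra_simps scale_mult1[symmetric] scale_mult2[symmetric])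
qed

lemma FF_mult: "FF (s + t) k (x * y) = (\<Sum>j\<le>k. scale (of_nat (k choose j)) (FF s j x * FF t (k - j) y))"
proof (induct k arbitrary: x y)
  case 0 then show ?case by simp
next
  case (Suc k)
  have L: "lin scale (FF (s + t) k)" by (rule lin_FF)
  let ?c = "of_int (s + t) - of_nat k :: 'r"
  have "FF (s + t) (Suc k) (x * y) = FF (s + t) k (D2 x * y) + FF (s + t) k (x * D2 y)
      + scale ?c (FF (s + t) k (x * y))"
    by (simp add: D2_mult lin_add[OF L] lin_scale[OF L])
  also have "\<dots> = (\<Sum>j\<le>k. scale (of_nat (k choose j)) (FF s j (D2 x) * FF t (k - j) y
      + FF s j x * FF t (k - j) (D2 y) + scale ?c (FF s j x * FF t (k - j) y)))"
    unfolding Suc M.scale_right_distrib sum.distrib M.scale_sum_right M.scale_scale mult.commute[of ?c] ..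
  also have "\<dots> = (\<Sum>j\<le>k. scale (of_nat (k choose j)) (FF s (Suc j) x * FF t (k - j) y
        + FF s j x * FF t (Suc k - j) y))"
    apply (intro sum.cong refl)
    subgoal for j using FF_term[of j k s x t y] by simp
    done
  also have "\<dots> = (\<Sum>j\<le>Suc k. scale (of_nat (Suc k choose j)) (FF s j x * FF t (Suc k - j) y))"
    by (rule pascal[where A="\<lambda>j i. FF s j x * FF t i y"])
  finally show ?case .
qed

lemma inv_nat: assumes "n > 0" shows "of_nat n * ring_inv (of_nat n :: 'r) = 1"
proof -
  obtain s :: 'r where s: "of_nat n * s = 1" using rat assms unfolding contains_rationals_def by blast
  have "\<exists>!s. (of_nat n :: 'r) * s = 1"
  proof
    show "of_nat n * s = 1" by (rule s)
  next
    fix s' :: 'r assume "of_nat n * s' = 1"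
    then have "s * (of_nat n * s') = s" by simp
    then show "s' = s" using s by (simp add: mult.assoc[symmetric] mult.commute[of s])
  qed
  then show ?thesis unfolding ring_inv_def by (rule theI')
qed

definition finv :: "nat \<Rightarrow> 'r" where "finv n = ring_inv (of_nat (fact n))"

lemma finv: "of_nat (fact n) * finv n = 1"
  unfolding finv_def by (rule inv_nat) simp

lemma inv_helper:
  fixes A a b c ia ib ic :: "'x::comm_ring_1"
  assumes "a * b * A = c" "a * ia = 1" "b * ib = 1" "c * ic = 1"
  shows "A * ic = ia * ib"
proof -
  have "A * ic = (A * ic) * (a * ia) * (b * ib)" using assms by simp
  also have "\<dots> = (a * b * A * ic) * (ia * ib)" by (simp add: ac_simps)
  also have "\<dots> = ia * ib" using assms by simp
  finally show ?thesis .
qed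

lemma coef: assumes "j \<le> n" shows "of_nat (n choose j) * finv n = finv j * finv (n - j)"
proof -
  have "fact j * fact (n - j) * (n choose j) = (fact n :: nat)" using binomial_fact_lemma[OF assms] .
  then have h: "of_nat (fact j) * of_nat (fact (n - j)) * of_nat (n choose j) = (of_nat (fact n) :: 'r)"
    by (metis of_nat_mult)
  note f1 = finv[of j] and f2 = finv[of "n - j"] and f3 = finv[of n]
  show ?thesis using inv_helper[OF h f1 f2 f3] .
qed

definition Cb :: "int \<Rightarrow> nat \<Rightarrow> 'a \<Rightarrow> 'a" where "Cb s n a = scale (finv n) (FF s n a)"

lemma lin_Cb: "lin scale (Cb s n)"
  using lin_FF[of s n] by (simp add: lin_def Cb_def M.scale_right_distrib mult.commute)

lemma D1n_Cb: "(D1 ^^ m) (Cb s l a) = Cb (s + int m) l ((D1 ^^ m) a)"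
  unfolding Cb_def by (simp add: lin_scale[OF lin_funpow[OF lin_D1]] D1n_FF)

lemma Cb_split: "scale (of_nat ((j + m) choose j)) (Cb 0 (j + m) c) = Cb (- int m) j (Cb 0 m c)"
proof -
  have "Cb (- int m) j (Cb 0 m c) = scale (finv j * finv m) (FF (- int m) j (FF 0 m c))"
    unfolding Cb_def by (simp add: lin_scale[OF lin_FF])
  also have "FF (- int m) j (FF 0 m c) = FF 0 (j + m) c"
    using FF_split[of 0 m j c] by (simp add: FF_comm add.commute)
  finally show ?thesis unfolding Cb_def using coef[of j "j + m"] by simp
qed

lemma Cb_mult: "Cb (s + t) k (x * y) = (\<Sum>j\<le>k. Cb s j x * Cb t (k - j) y)"
proof -
  have "Cb (s + t) k (x * y) = (\<Sum>j\<le>k. scale (finv k * of_nat (k choose j)) (FF s j x * FF t (k - j) y))"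
    unfolding Cb_def FF_mult M.scale_sum_right by simp
  also have "\<dots> = (\<Sum>j\<le>k. Cb s j x * Cb t (k - j) y)"
    apply (intro sum.cong refl)
    subgoal for j using coef[of j k]
      by (simp add: Cb_def mult.commute scale_mult1[symmetric] scale_mult2[symmetric])
    done
  finally show ?thesis .
qed

definition mu :: "nat \<Rightarrow> 'a \<Rightarrow> 'a \<Rightarrow> 'a" where
  "mu k u v = scale (finv k) ((D1 ^^ k) u * FF 0 k v)"

lemma mu_Cb: "mu k u v = (D1 ^^ k) u * Cb 0 k v"
  unfolding mu_def Cb_def by (simp add: scale_mult2)

definition T :: "'a \<Rightarrow> 'a \<Rightarrow> 'a \<Rightarrow> nat \<Rightarrow> nat \<Rightarrow> nat \<Rightarrow> 'a" where
  "T a b c m l j = (D1 ^^ (j + l)) a * (Cb (int m) l ((D1 ^^ m) b) * Cb (- int m) j (Cb 0 m c))"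

lemma lhs_term: "mu k (mu l a b) c = (\<Sum>j\<le>k. T a b c (k - j) l j)"
proof -
  have "mu k (mu l a b) c = (\<Sum>j\<le>k. scale (of_nat (k choose j))
      ((D1 ^^ j) ((D1 ^^ l) a) * (D1 ^^ (k - j)) (Cb 0 l b)) * Cb 0 k c)"
    unfolding mu_Cb leibniz sum_distrib_right ..
  also have "\<dots> = (\<Sum>j\<le>k. T a b c (k - j) l j)"
  proof (intro sum.cong refl)
    fix j assume "j \<in> {..k}"
    then have jk: "j + (k - j) = k" by simp
    have "scale (of_nat (k choose j)) (Cb 0 k c) = Cb (- int (k - j)) j (Cb 0 (k - j) c)"
      using Cb_split[of j "k - j" c] by (simp only: jk)
    then show "scale (of_nat (k choose j)) ((D1 ^^ j) ((D1 ^^ l) a) * (D1 ^^ (k - j)) (Cb 0 l b)) * Cb 0 k c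
        = T a b c (k - j) l j"
      unfolding T_def D1n_Cb
      by (simp add: funpow_add scale_mult1[symmetric] scale_mult2 mult.assoc)
  qed
  finally show ?thesis .
qed

lemma rhs_term: "mu p a (mu l b c) = (\<Sum>i\<le>p. T a b c l i (p - i))"
proof -
  have "mu p a (mu l b c) = (D1 ^^ p) a * Cb (int l + - int l) p ((D1 ^^ l) b * Cb 0 l c)"
    unfolding mu_Cb by simp
  also have "\<dots> = (\<Sum>i\<le>p. T a b c l i (p - i))"
    unfolding Cb_mult sum_distrib_left
    by (intro sum.cong refl) (simp add: T_def)
  finally show ?thesis .
qed

lemma reindex3:
  fixes T :: "nat \<Rightarrow> nat \<Rightarrow> nat \<Rightarrow> 'b::comm_monoid_add"
  shows "(\<Sum>k\<le>N. \<Sum>j\<le>k. T (k - j) (N - k) j) = (\<Sum>p\<le>N. \<Sum>i\<le>p. T (N - p) i (p - i))"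
proof -
  have L: "(\<Sum>k\<le>N. \<Sum>j\<le>k. T (k - j) (N - k) j) = (\<Sum>(j, m)\<in>{(i, j). i + j \<le> N}. T m (N - (j + m)) j)"
    unfolding sum.triangle_reindex_eq[of "\<lambda>j m. T m (N - (j + m)) j"]
    by (intro sum.cong refl) simp
  have R: "(\<Sum>p\<le>N. \<Sum>i\<le>p. T (N - p) i (p - i)) = (\<Sum>(i, j)\<in>{(i, j). i + j \<le> N}. T (N - (i + j)) i j)"
    unfolding sum.triangle_reindex_eq[of "\<lambda>i j. T (N - (i + j)) i j"]
    by (intro sum.cong refl) simp
  have "(\<Sum>(j, m)\<in>{(i, j). i + j \<le> N}. T m (N - (j + m)) j) = (\<Sum>(i, j)\<in>{(i, j). i + j \<le> N}. T (N - (i + j)) i j)"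
    by (rule sum.reindex_bij_witness[where i="\<lambda>(i, j). (j, N - (i + j))" and j="\<lambda>(j, m). (N - (j + m), j)"]) auto
  then show ?thesis using L R by simp
qed

lemma core: "(\<Sum>k\<le>N. mu k (mu (N - k) a b) c) = (\<Sum>k\<le>N. mu k a (mu (N - k) b c))"
  unfolding lhs_term rhs_term by (rule reindex3)

lemma mu_add1: "mu k (u + u') v = mu k u v + mu k u' v"
  unfolding mu_Cb by (simp add: lin_add[OF lin_funpow[OF lin_D1]] distrib_right)
lemma mu_add2: "mu k u (v + v') = mu k u v + mu k u v'"
  unfolding mu_Cb by (simp add: lin_add[OF lin_Cb] distrib_left)
lemma mu_zero1[simp]: "mu k 0 v = 0"
  unfolding mu_Cb by (simp add: lin_zero[OF lin_funpow[OF lin_D1]])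
lemma mu_zero2[simp]: "mu k u 0 = 0"
  unfolding mu_Cb by (simp add: lin_zero[OF lin_Cb])
lemma mu_sum2: "mu k u (sum f A) = (\<Sum>x\<in>A. mu k u (f x))"
  by (induct A rule: infinite_finite_induct) (simp_all add: mu_add2)
lemma mu_sum1: "mu k (sum f A) v = (\<Sum>x\<in>A. mu k (f x) v)"
  by (induct A rule: infinite_finite_induct) (simp_all add: mu_add1)

definition st :: "(nat \<Rightarrow> 'a) \<Rightarrow> (nat \<Rightarrow> 'a) \<Rightarrow> nat \<Rightarrow> 'a" where
  "st f g = (\<lambda>n. \<Sum>k\<le>n. \<Sum>i\<le>n - k. mu k (f i) (g (n - k - i)))"

lemma st_eq: "star_prod scale D1 D2 f g = st f g"
  unfolding star_prod_def st_def mu_def finv_def FF0 ..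

definition cst :: "'a \<Rightarrow> nat \<Rightarrow> 'a" where "cst a n = (if n = 0 then a else 0)"
definition sh :: "(nat \<Rightarrow> 'a) \<Rightarrow> nat \<Rightarrow> 'a" where "sh f n = (if n = 0 then 0 else f (n - 1))"

lemma decomp: "f = (\<lambda>n. cst (f 0) n + sh (\<lambda>m. f (Suc m)) n)"
  by (rule ext) (simp add: cst_def sh_def)

lemma st_add1: "st (\<lambda>n. f n + f' n) g = (\<lambda>n. st f g n + st f' g n)"
  unfolding st_def by (simp add: mu_add1 sum.distrib)
lemma st_add2: "st f (\<lambda>n. g n + g' n) = (\<lambda>n. st f g n + st f g' n)"
  unfolding st_def by (simp add: mu_add2 sum.distrib)

lemma st_sh1: "st (sh f) g = sh (st f g)"
proof (rule ext)
  fix n show "st (sh f) g n = sh (st f g) n"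
  proof (cases n)
    case 0 then show ?thesis by (simp add: st_def sh_def)
  next
    case (Suc m)
    have "st (sh f) g (Suc m) = (\<Sum>k\<le>m. \<Sum>i\<le>Suc m - k. mu k (sh f i) (g (Suc m - k - i)))"
      unfolding st_def by (simp add: sh_def)
    also have "\<dots> = (\<Sum>k\<le>m. \<Sum>i\<le>m - k. mu k (f i) (g (m - k - i)))"
    proof (rule sum.cong[OF refl])
      fix k assume "k \<in> {..m}"
      then have e: "Suc m - k = Suc (m - k)" by simp
      show "(\<Sum>i\<le>Suc m - k. mu k (sh f i) (g (Suc m - k - i))) = (\<Sum>i\<le>m - k. mu k (f i) (g (m - k - i)))"
        unfolding e sum.atMost_Suc_shift by (simp add: sh_def)
    qed
    finally show ?thesis using Suc by (simp add: st_def sh_def)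
  qed
qed

lemma st_sh2: "st f (sh g) = sh (st f g)"
proof (rule ext)
  fix n show "st f (sh g) n = sh (st f g) n"
  proof (cases n)
    case 0 then show ?thesis by (simp add: st_def sh_def)
  next
    case (Suc m)
    have "st f (sh g) (Suc m) = (\<Sum>k\<le>m. \<Sum>i\<le>Suc m - k. mu k (f i) (sh g (Suc m - k - i)))"
      unfolding st_def by (simp add: sh_def)
    also have "\<dots> = (\<Sum>k\<le>m. \<Sum>i\<le>m - k. mu k (f i) (g (m - k - i)))"
    proof (rule sum.cong[OF refl])
      fix k assume "k \<in> {..m}"
      then have e: "Suc m - k = Suc (m - k)" by simp
      have s1: "(\<Sum>i\<le>m - k. mu k (f i) (sh g (Suc (m - k) - i))) = (\<Sum>i\<le>m - k. mu k (f i) (g (m - k - i)))"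
        by (rule sum.cong[OF refl]) (simp add: sh_def Suc_diff_le)
      show "(\<Sum>i\<le>Suc m - k. mu k (f i) (sh g (Suc m - k - i))) = (\<Sum>i\<le>m - k. mu k (f i) (g (m - k - i)))"
        unfolding e sum.atMost_Suc s1 by (simp add: sh_def)
    qed
    finally show ?thesis using Suc by (simp add: st_def sh_def)
  qed
qed

lemma mu_cst1: "mu k (cst a i) v = (if i = 0 then mu k a v else 0)"
  by (simp add: cst_def)

lemma st_c1: "st (cst a) g n = (\<Sum>k\<le>n. mu k a (g (n - k)))"
  unfolding st_def mu_cst1 by simp

lemma st_c2: "st f (cst b) n = (\<Sum>k\<le>n. mu k (f (n - k)) b)"
proof -
  have "(\<Sum>i\<le>n - k. mu k (f i) (cst b (n - k - i))) = mu k (f (n - k)) b" for k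
  proof -
    have "(\<Sum>i\<le>n - k. mu k (f i) (cst b (n - k - i))) = (\<Sum>i\<le>n - k. if i = n - k then mu k (f i) b else 0)"
      by (rule sum.cong[OF refl]) (auto simp: cst_def)
    then show ?thesis by simp
  qed
  then show ?thesis unfolding st_def by simp
qed

lemma st_cc: "st (cst a) (cst b) n = mu n a b"
proof -
  have "(\<Sum>k\<le>n. mu k a (cst b (n - k))) = (\<Sum>k\<le>n. if k = n then mu k a b else 0)"
    by (rule sum.cong[OF refl]) (auto simp: cst_def)
  then show ?thesis unfolding st_c1 by simp
qed

lemma assoc_c3: "st (st (cst a) (cst b)) (cst e) n = st (cst a) (st (cst b) (cst e)) n"
proof -
  have "st (st (cst a) (cst b)) (cst e) n = (\<Sum>k\<le>n. mu k (mu (n - k) a b) e)"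
    by (simp only: st_c2[of "st (cst a) (cst b)"] st_cc)
  moreover have "st (cst a) (st (cst b) (cst e)) n = (\<Sum>k\<le>n. mu k a (mu (n - k) b e))"
    by (simp only: st_c1[of a] st_cc)
  ultimately show ?thesis using core by simp
qed

lemma assoc_n: "\<forall>f g h. st (st f g) h n = st f (st g h) n"
proof (induct n rule: less_induct)
  case (less n)
  have IH: "sh (st (st f g) h) n = sh (st f (st g h)) n" for f g h
    using less[of "n - 1"] by (cases "n = 0") (simp_all add: sh_def)
  have step3: "st (st (cst a) (cst b)) h n = st (cst a) (st (cst b) h) n" for a b h
  proof -
    obtain e h' where fe: "h = (\<lambda>n. cst e n + sh h' n)" using decomp[of h] by blast
    show ?thesis unfolding fe by (simp add: st_add2 st_sh2 assoc_c3 IH)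
  qed
  have step2: "st (st (cst a) g) h n = st (cst a) (st g h) n" for a g h
  proof -
    obtain b g' where fe: "g = (\<lambda>n. cst b n + sh g' n)" using decomp[of g] by blast
    show ?thesis unfolding fe by (simp add: st_add1 st_add2 st_sh1 st_sh2 step3 IH)
  qed
  have step1: "st (st f g) h n = st f (st g h) n" for f g h
  proof -
    obtain a f' where fe: "f = (\<lambda>n. cst a n + sh f' n)" using decomp[of f] by blast
    show ?thesis unfolding fe by (simp add: st_add1 st_sh1 step2 IH)
  qed
  show ?case using step1 by blast
qed

end

theorem theorem5:
  fixes scale :: "'r::comm_ring_1 \<Rightarrow> 'a::ring \<Rightarrow> 'a"
    and D1 D2 :: "'a \<Rightarrow> 'a"
  assumes "assoc_algebra scale"
    and "contains_rationals TYPE('r)"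
    and "derivation scale D1" and "derivation scale D2"
    and "\<forall>a. D1 (D2 a) - D2 (D1 a) = D1 a"
  shows "\<forall>f g h :: nat \<Rightarrow> 'a.
     star_prod scale D1 D2 (star_prod scale D1 D2 f g) h
       = star_prod scale D1 D2 f (star_prod scale D1 D2 g h)"
proof -
  interpret SP scale D1 D2 using assms by (unfold_locales) auto
  show ?thesis unfolding st_eq using assoc_n by (auto intro!: ext)
qed

end
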